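(* Fix $\mathsf{SNR}>0$ and integers $L\ge1$, $M\ge1$. Let $\{h_{i,j}\}_{i\ge1,\,1\le j\le L}$ be i.i.d. $\mathcal{CN}(0,1)$ and set $C_i=\frac1L\sum_{j=1}^L\log_2(1+\mathsf{SNR}|h_{i,j}|^2)$. For an initial rate $R_{\mathrm{init}}>0$ define $\mathcal{T}(R_{\mathrm{init}})=\min\bigl(M,\ \min\{t\ge1:\sum_{i=1}^tC_i>R_{\mathrm{init}}\}\bigr)$, the post-HARQ outage probability $\varepsilon(R_{\mathrm{init}})=\mathbb{P}\bigl[\sum_{i=1}^M C_i\le R_{\mathrm{init}}\bigr]$, and the HARQ goodput $$\eta_{\mathrm{HARQ}}(R_{\mathrm{init}})=\frac{R_{\mathrm{init}}\,(1-\varepsilon(R_{\mathrm{init}}))}{\mathbb{E}[\mathcal{T}(R_{\mathrm{init}})]}.$$ For a non-HARQ system with diversity order $ML$, define for $R>0$ the goodput $g_{ML}(R)=R\,(1-\varepsilon_{ML}(R))$ with $\varepsilon_{ML}(R)=\mathbb{P}\bigl[\frac{1}{ML}\sum_{k=1}^{ML}\log_2(1+\mathsf{SNR}|g_k|^2)\le R\bigr]$, $g_k$ i.i.d. $\mathcal{CN}(0,1)$, and let $R^\star_{ML}$ be the largest maximizer of $g_{ML}$ over $R>0$ (assumed to exist). Then every maximizer $R^\star_{\mathrm{init}}$ of $\eta_{\mathrm{HARQ}}$ over $R_{\mathrm{init}}>0$ satisfies $$\frac{R^\star_{\mathrm{init}}}{M}\le R^\star_{ML},$$ i.e., the optimal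 HARQ initial rate, divided by $M$, is at most the optimal transmitted rate of the non-HARQ system with diversity order $ML$.
   Context: Model: Rayleigh block fading; each HARQ round spans $L$ independently faded blocks with gains $h_{i,j}$, independent across rounds; incremental-redundancy HARQ accumulates mutual information across rounds, so a packet is decoded in the first round $t$ at which the accumulated mutual information $\sum_{i\le t}C_i$ exceeds $R_{\mathrm{init}}$; at most $M$ rounds are allowed, after which (if still undecoded) a post-HARQ outage occurs and the HARQ process restarts. $\mathcal{CN}(0,1)$ denotes a circularly symmetric complex Gaussian with unit variance. *)

theory Defs
  imports "HOL-Probability.Probability"
begin

definition CN01_density :: "complex \<Rightarrow> ennreal" where
  "CN01_density z = ennreal (exp (- (cmod z)\<^sup>2) / pi)"

definition harq_C :: "real \<Rightarrow> nat \<Rightarrow> (nat \<Rightarrow> nat \<Rightarrow> 'a \<Rightarrow> complex) \<Rightarrow> nat \<Rightarrow> 'a \<Rightarrow> real" where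
  "harq_C SNR L h i \<omega> = (1 / real L) * (\<Sum>j=1..L. log 2 (1 + SNR * (cmod (h i j \<omega>))\<^sup>2))"

definition harq_acc :: "real \<Rightarrow> nat \<Rightarrow> (nat \<Rightarrow> nat \<Rightarrow> 'a \<Rightarrow> complex) \<Rightarrow> nat \<Rightarrow> 'a \<Rightarrow> real" where
  "harq_acc SNR L h t \<omega> = (\<Sum>i=1..t. harq_C SNR L h i \<omega>)"

definition harq_T :: "real \<Rightarrow> nat \<Rightarrow> nat \<Rightarrow> (nat \<Rightarrow> nat \<Rightarrow> 'a \<Rightarrow> complex) \<Rightarrow> real \<Rightarrow> 'a \<Rightarrow> nat" where
  "harq_T SNR L M h R \<omega> =
     (if \<exists>t. 1 \<le> t \<and> harq_acc SNR L h t \<omega> > R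
      then min M (LEAST t. 1 \<le> t \<and> harq_acc SNR L h t \<omega> > R)
      else M)"

definition harq_eps :: "'a measure \<Rightarrow> real \<Rightarrow> nat \<Rightarrow> nat \<Rightarrow> (nat \<Rightarrow> nat \<Rightarrow> 'a \<Rightarrow> complex) \<Rightarrow> real \<Rightarrow> real" where
  "harq_eps P SNR L M h R = measure P {\<omega> \<in> space P. harq_acc SNR L h M \<omega> \<le> R}"

definition harq_eta :: "'a measure \<Rightarrow> real \<Rightarrow> nat \<Rightarrow> nat \<Rightarrow> (nat \<Rightarrow> nat \<Rightarrow> 'a \<Rightarrow> complex) \<Rightarrow> real \<Rightarrow> real" where
  "harq_eta P SNR L M h R =
     R * (1 - harq_eps P SNR L M h R) / (\<integral>\<omega>. real (harq_T SNR L M h R \<omega>) \<partial>P)"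

definition nonharq_eps :: "'a measure \<Rightarrow> real \<Rightarrow> nat \<Rightarrow> (nat \<Rightarrow> 'a \<Rightarrow> complex) \<Rightarrow> real \<Rightarrow> real" where
  "nonharq_eps P SNR N g R =
     measure P {\<omega> \<in> space P.
        (1 / real N) * (\<Sum>k=1..N. log 2 (1 + SNR * (cmod (g k \<omega>))\<^sup>2)) \<le> R}"

definition nonharq_goodput :: "'a measure \<Rightarrow> real \<Rightarrow> nat \<Rightarrow> (nat \<Rightarrow> 'a \<Rightarrow> complex) \<Rightarrow> real \<Rightarrow> real" where
  "nonharq_goodput P SNR N g R = R * (1 - nonharq_eps P SNR N g R)"

end

theory Submission
  imports Defs
begin

lemma (in prob_space) joint_prob_eq:
  fixes X :: "'i \<Rightarrow> 'a \<Rightarrow> 'b::topological_space"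
  assumes I: "I \<noteq> {}"
    and meas: "\<And>i. i \<in> I \<Longrightarrow> X i \<in> borel_measurable M"
    and ind: "indep_vars (\<lambda>_. borel) X I"
    and D: "\<And>i. i \<in> I \<Longrightarrow> distr M borel (X i) = D"
    and A: "A \<in> sets (PiM I (\<lambda>_. borel))"
  shows "prob ((\<lambda>\<omega>. \<lambda>i\<in>I. X i \<omega>) -` A \<inter> space M) = measure (PiM I (\<lambda>_. D)) A"
proof -
  have jm: "(\<lambda>\<omega>. \<lambda>i\<in>I. X i \<omega>) \<in> measurable M (PiM I (\<lambda>_. borel))"
    using meas by (intro measurable_restrict) auto
  have "prob ((\<lambda>\<omega>. \<lambda>i\<in>I. X i \<omega>) -` A \<inter> space M)
      = measure (distr M (PiM I (\<lambda>_. borel)) (\<lambda>\<omega>. \<lambda>i\<in>I. X i \<omega>)) A"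
    using jm A by (simp add: measure_distr)
  also have "distr M (PiM I (\<lambda>_. borel)) (\<lambda>\<omega>. \<lambda>i\<in>I. X i \<omega>) = (\<Pi>\<^sub>M i\<in>I. distr M borel (X i))"
    using indep_vars_iff_distr_eq_PiM'[OF I, where M'="\<lambda>_. borel" and X=X] meas ind by auto
  also have "\<dots> = PiM I (\<lambda>_. D)"
    using D by (intro PiM_cong) auto
  finally show ?thesis .
qed

lemma reindex_measure:
  fixes F :: "'b \<Rightarrow> real"
  assumes D: "prob_space D" and e: "bij_betw e I K" and F[measurable]: "F \<in> borel_measurable D"
    and fin: "finite I"
  shows "measure (PiM I (\<lambda>_. D)) {x\<in>space (PiM I (\<lambda>_. D)). (\<Sum>p\<in>I. F (x p)) \<le> c}
       = measure (PiM K (\<lambda>_. D)) {x\<in>space (PiM K (\<lambda>_. D)). (\<Sum>k\<in>K. F (x k)) \<le> c}"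
proof -
  have inj: "inj_on e I" and eI: "e \<in> I \<rightarrow> K" using e by (auto simp: bij_betw_def)
  have finK: "finite K" using e fin bij_betw_finite by blast
  let ?t = "\<lambda>\<omega>. \<lambda>n\<in>I. \<omega> (e n)"
  have dr: "distr (PiM K (\<lambda>_. D)) (PiM I (\<lambda>_. D)) ?t = PiM I (\<lambda>_. D)"
    using distr_PiM_reindex[of K "\<lambda>_. D" e I] D inj eI by simp
  have tm: "?t \<in> measurable (PiM K (\<lambda>_. D)) (PiM I (\<lambda>_. D))"
    using eI by (intro measurable_restrict measurable_component_singleton) auto
  have AI: "{x\<in>space (PiM I (\<lambda>_. D)). (\<Sum>p\<in>I. F (x p)) \<le> c} \<in> sets (PiM I (\<lambda>_. D))"
    by measurable
  have "measure (PiM I (\<lambda>_. D)) {x\<in>space (PiM I (\<lambda>_. D)). (\<Sum>p\<in>I. F (x p)) \<le> c}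
      = measure (PiM K (\<lambda>_. D)) (?t -` {x\<in>space (PiM I (\<lambda>_. D)). (\<Sum>p\<in>I. F (x p)) \<le> c} \<inter> space (PiM K (\<lambda>_. D)))"
    by (subst dr[symmetric]) (simp add: measure_distr tm AI)
  also have "?t -` {x\<in>space (PiM I (\<lambda>_. D)). (\<Sum>p\<in>I. F (x p)) \<le> c} \<inter> space (PiM K (\<lambda>_. D))
       = {x\<in>space (PiM K (\<lambda>_. D)). (\<Sum>k\<in>K. F (x k)) \<le> c}"
  proof -
    have "\<And>x. (\<Sum>p\<in>I. F (x (e p))) = (\<Sum>k\<in>K. F (x k))"
      using sum.reindex_bij_betw[OF e, of "\<lambda>k. F (x k)" for x] by simp
    moreover have "\<And>x. x \<in> space (PiM K (\<lambda>_. D)) \<Longrightarrow> ?t x \<in> space (PiM I (\<lambda>_. D))"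
      using measurable_space[OF tm] by blast
    ultimately show ?thesis by auto
  qed
  finally show ?thesis .
qed

lemma (in prob_space) eps_eq:
  fixes h :: "nat \<Rightarrow> nat \<Rightarrow> 'a \<Rightarrow> complex" and g :: "nat \<Rightarrow> 'a \<Rightarrow> complex"
  assumes L: "L \<ge> 1" and n: "n \<ge> 1"
    and h_distr: "\<And>i j. i \<ge> 1 \<Longrightarrow> 1 \<le> j \<Longrightarrow> j \<le> L \<Longrightarrow>
                    distributed M lborel (h i j) CN01_density"
    and h_indep: "indep_vars (\<lambda>_. borel) (\<lambda>(i, j). h i j) ({1..} \<times> {1..L})"
    and g_distr: "\<And>k. 1 \<le> k \<Longrightarrow> k \<le> n * L \<Longrightarrow> distributed M lborel (g k) CN01_density"
    and g_indep: "indep_vars (\<lambda>_. borel) g {1..n * L}"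
  shows "harq_eps M SNR L n h R = nonharq_eps M SNR (n * L) g (R / real n)"
proof -
  define D where "D = density lborel CN01_density"
  define f where "f = (\<lambda>z::complex. log 2 (1 + SNR * (cmod z)\<^sup>2))"
  define I where "I = {1..n} \<times> {1..L}"
  define K where "K = {1..n*L}"
  define H where "H = (\<lambda>(i, j). h i j)"
  define c where "c = real L * R"
  have Ln: "real L > 0" "real n > 0" using L n by auto
  have hm: "\<And>p. p \<in> I \<Longrightarrow> H p \<in> borel_measurable M"
    using distributed_measurable[OF h_distr] by (auto simp: I_def H_def)
  have hD: "\<And>p. p \<in> I \<Longrightarrow> distr M borel (H p) = D"
  proof -
    fix p assume "p \<in> I"
    then obtain i j where p: "p = (i,j)" "i \<ge> 1" "1 \<le> j" "j \<le> L" by (auto simp: I_def)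
    have "distr M borel (H p) = distr M lborel (H p)" by (intro distr_cong) auto
    also have "\<dots> = D" using distributed_distr_eq_density[OF h_distr[OF p(2-4)]] p by (simp add: H_def D_def)
    finally show "distr M borel (H p) = D" .
  qed
  have gm: "\<And>k. k \<in> K \<Longrightarrow> g k \<in> borel_measurable M"
    using distributed_measurable[OF g_distr] by (auto simp: K_def)
  have gD: "\<And>k. k \<in> K \<Longrightarrow> distr M borel (g k) = D"
  proof -
    fix k assume k: "k \<in> K"
    have "distr M borel (g k) = distr M lborel (g k)" by (intro distr_cong) auto
    also have "\<dots> = D" using distributed_distr_eq_density[OF g_distr] k by (simp add: K_def D_def)
    finally show "distr M borel (g k) = D" .
  qed
  have I_ne: "I \<noteq> {}" and K_ne: "K \<noteq> {}" using L n by (auto simp: I_def K_def)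
  have finI: "finite I" by (simp add: I_def)
  have hind: "indep_vars (\<lambda>_. borel) H I"
    unfolding H_def I_def by (rule indep_vars_subset[OF h_indep]) auto
  have gind: "indep_vars (\<lambda>_. borel) g K" using g_indep by (simp add: K_def)
  obtain p0 where p0: "p0 \<in> I" using I_ne by auto
  have Dprob: "prob_space D" using hD[OF p0] hm[OF p0] prob_space_distr by metis
  have sD: "sets D = sets borel" by (simp add: D_def)
  have fm: "f \<in> borel_measurable D"
    unfolding measurable_cong_sets[OF sD refl] f_def by measurable
  have fmb[measurable]: "f \<in> borel_measurable borel" unfolding f_def by measurable
  have spD: "space D = UNIV" by (simp add: D_def)
  have spPI: "space (PiM I (\<lambda>_. D)) = space (PiM I (\<lambda>_. borel))" by (simp add: space_PiM spD)
  have spPK: "space (PiM K (\<lambda>_. D)) = space (PiM K (\<lambda>_. borel))" by (simp add: space_PiM spD)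
  obtain e where e: "bij_betw e I K"
    using finite_same_card_bij[of I K] by (auto simp: I_def K_def card_cartesian_product)
  have AI: "{x\<in>space (PiM I (\<lambda>_. borel)). (\<Sum>p\<in>I. f (x p)) \<le> c} \<in> sets (PiM I (\<lambda>_. borel))"
    by measurable
  have AK: "{x\<in>space (PiM K (\<lambda>_. borel)). (\<Sum>p\<in>K. f (x p)) \<le> c} \<in> sets (PiM K (\<lambda>_. borel))"
    by measurable
  have "harq_eps M SNR L n h R = prob ((\<lambda>\<omega>. \<lambda>i\<in>I. H i \<omega>) -` {x\<in>space (PiM I (\<lambda>_. borel)). (\<Sum>p\<in>I. f (x p)) \<le> c} \<inter> space M)"
  proof -
    have "\<And>\<omega>. harq_acc SNR L h n \<omega> = (1 / real L) * (\<Sum>p\<in>I. f (H p \<omega>))"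
      by (simp add: harq_acc_def harq_C_def I_def H_def f_def sum.cartesian_product sum_distrib_left split_beta)
    hence "\<And>\<omega>. harq_acc SNR L h n \<omega> \<le> R \<longleftrightarrow> (\<Sum>p\<in>I. f (H p \<omega>)) \<le> c"
      using Ln by (simp add: c_def divide_le_eq mult.commute)
    thus ?thesis unfolding harq_eps_def by (intro arg_cong[where f=prob]) (auto simp: space_PiM)
  qed
  also have "\<dots> = measure (PiM I (\<lambda>_. D)) {x\<in>space (PiM I (\<lambda>_. borel)). (\<Sum>p\<in>I. f (x p)) \<le> c}"
    by (rule joint_prob_eq[OF I_ne hm hind hD AI])
  also have "\<dots> = measure (PiM K (\<lambda>_. D)) {x\<in>space (PiM K (\<lambda>_. D)). (\<Sum>k\<in>K. f (x k)) \<le> c}"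
    using reindex_measure[OF Dprob e fm finI, of c] spPI by simp
  also have "\<dots> = prob ((\<lambda>\<omega>. \<lambda>i\<in>K. g i \<omega>) -` {x\<in>space (PiM K (\<lambda>_. borel)). (\<Sum>p\<in>K. f (x p)) \<le> c} \<inter> space M)"
    using joint_prob_eq[OF K_ne gm gind gD AK] spPK by simp
  also have "\<dots> = nonharq_eps M SNR (n * L) g (R / real n)"
  proof -
    have "\<And>\<omega>. (1 / real (n*L)) * (\<Sum>k=1..n*L. log 2 (1 + SNR * (cmod (g k \<omega>))\<^sup>2)) \<le> R / real n
           \<longleftrightarrow> (\<Sum>p\<in>K. f (g p \<omega>)) \<le> c"
      using Ln by (simp add: c_def K_def f_def field_simps)
    thus ?thesis unfolding nonharq_eps_def by (intro arg_cong[where f=prob]) (auto simp: space_PiM)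
  qed
  finally show ?thesis .
qed

lemma T_ge1: "n \<ge> 1 \<Longrightarrow> harq_T SNR L n h R \<omega> \<ge> 1"
  unfolding harq_T_def
  by (auto intro: LeastI2_ex)

lemma T_le: "harq_T SNR L n h R \<omega> \<le> n"
  unfolding harq_T_def by auto

lemma T_mono:
  assumes "R' \<le> R"
  shows "harq_T SNR L n h R' \<omega> \<le> harq_T SNR L n h R \<omega>"
proof (cases "\<exists>t. 1 \<le> t \<and> harq_acc SNR L h t \<omega> > R")
  case True
  then obtain t where t: "1 \<le> t \<and> harq_acc SNR L h t \<omega> > R" by blast
  define t0 where "t0 = (LEAST t. 1 \<le> t \<and> harq_acc SNR L h t \<omega> > R)"
  have t0: "1 \<le> t0 \<and> harq_acc SNR L h t0 \<omega> > R" unfolding t0_def by (rule LeastI[of _ t]) (rule t)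
  hence t0': "1 \<le> t0 \<and> harq_acc SNR L h t0 \<omega> > R'" using assms by auto
  have "(LEAST t. 1 \<le> t \<and> harq_acc SNR L h t \<omega> > R') \<le> t0" by (rule Least_le) (rule t0')
  thus ?thesis using True t0' unfolding harq_T_def t0_def by auto
next
  case False
  thus ?thesis unfolding harq_T_def by auto
qed

lemma (in prob_space) T_meas:
  assumes hm: "\<And>i j. 1 \<le> i \<Longrightarrow> 1 \<le> j \<Longrightarrow> j \<le> L \<Longrightarrow> h i j \<in> borel_measurable M"
  shows "(\<lambda>\<omega>. real (harq_T SNR L n h R \<omega>)) \<in> borel_measurable M"
proof -
  have [measurable]: "harq_acc SNR L h t \<in> borel_measurable M" for t
  proof -
    have "\<And>i j. i \<in> {1..t} \<Longrightarrow> j \<in> {1..L} \<Longrightarrow> (\<lambda>\<omega>. log 2 (1 + SNR * (cmod (h i j \<omega>))\<^sup>2)) \<in> borel_measurable M"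
      using hm by (auto intro!: measurable_compose[OF _ borel_measurable_continuous_onI] continuous_intros)
    then show ?thesis unfolding harq_acc_def harq_C_def
      by (auto intro!: borel_measurable_sum borel_measurable_times)
  qed
  show ?thesis unfolding harq_T_def by measurable
qed

theorem theorem1:
  fixes P :: "'a measure"
    and SNR :: real and L M :: nat
    and h :: "nat \<Rightarrow> nat \<Rightarrow> 'a \<Rightarrow> complex"
    and g :: "nat \<Rightarrow> 'a \<Rightarrow> complex"
    and Rstar Rinit :: real
  assumes "prob_space P"
    and "SNR > 0" and "L \<ge> 1" and "M \<ge> 1"
    and h_distr: "\<And>i j. i \<ge> 1 \<Longrightarrow> 1 \<le> j \<Longrightarrow> j \<le> L \<Longrightarrow>
                    distributed P lborel (h i j) CN01_density"
    and h_indep: "prob_space.indep_vars P (\<lambda>_. borel) (\<lambda>(i, j). h i j) ({1..} \<times> {1..L})"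
    and g_distr: "\<And>k. 1 \<le> k \<Longrightarrow> k \<le> M * L \<Longrightarrow> distributed P lborel (g k) CN01_density"
    and g_indep: "prob_space.indep_vars P (\<lambda>_. borel) g {1..M * L}"
    and Rstar_pos: "Rstar > 0"
    and Rstar_max: "\<And>R. R > 0 \<Longrightarrow> nonharq_goodput P SNR (M * L) g R \<le> nonharq_goodput P SNR (M * L) g Rstar"
    and Rstar_largest: "\<And>R. R > 0 \<Longrightarrow>
          nonharq_goodput P SNR (M * L) g R = nonharq_goodput P SNR (M * L) g Rstar \<Longrightarrow> R \<le> Rstar"
    and Rinit_pos: "Rinit > 0"
    and Rinit_max: "\<And>R. R > 0 \<Longrightarrow> harq_eta P SNR L M h R \<le> harq_eta P SNR L M h Rinit"
  shows "Rinit / real M \<le> Rstar"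
proof (rule ccontr)
  interpret prob_space P by fact
  assume "\<not> Rinit / real M \<le> Rstar"
  hence lt: "Rstar < Rinit / real M" by simp
  have Mp: "real M > 0" using \<open>M \<ge> 1\<close> by simp
  define R' where "R' = real M * Rstar"
  have R'pos: "R' > 0" using Mp Rstar_pos by (simp add: R'_def)
  have R'le: "R' \<le> Rinit" using lt Mp by (simp add: R'_def field_simps)
  define G where "G = nonharq_goodput P SNR (M * L) g"
  define E where "E = (\<lambda>R. \<integral>\<omega>. real (harq_T SNR L M h R \<omega>) \<partial>P)"
  have hm: "\<And>i j. 1 \<le> i \<Longrightarrow> 1 \<le> j \<Longrightarrow> j \<le> L \<Longrightarrow> h i j \<in> borel_measurable P"
    using distributed_measurable[OF h_distr] by simp
  have int: "integrable P (\<lambda>\<omega>. real (harq_T SNR L M h R \<omega>))" for R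
    by (rule integrable_const_bound[where B="real M"]) (auto simp: T_le T_meas[OF hm])
  have Emono: "E R' \<le> E Rinit" unfolding E_def
    by (rule integral_mono[OF int int]) (simp add: T_mono R'le)
  have E1: "E R' \<ge> 1"
  proof -
    have "(\<integral>\<omega>. 1 \<partial>P) \<le> E R'" unfolding E_def
      by (rule integral_mono[OF _ int]) (use T_ge1[OF \<open>M \<ge> 1\<close>] in auto)
    thus ?thesis by (simp add: prob_space)
  qed
  have eta: "harq_eta P SNR L M h R = real M * G (R / real M) / E R" for R
  proof -
    have "harq_eps P SNR L M h R = nonharq_eps P SNR (M * L) g (R / real M)"
      by (rule eps_eq[OF \<open>L \<ge> 1\<close> \<open>M \<ge> 1\<close> h_distr h_indep g_distr g_indep])
    thus ?thesis using Mp unfolding harq_eta_def G_def nonharq_goodput_def E_def by simp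
  qed
  have Gpos: "G (Rinit / real M) \<ge> 0"
    unfolding G_def nonharq_goodput_def nonharq_eps_def using Rinit_pos Mp by simp
  have "Rinit / real M > 0" using Rinit_pos Mp by simp
  hence Gle: "G (Rinit / real M) \<le> G Rstar" and Gne: "G (Rinit / real M) \<noteq> G Rstar"
    using Rstar_max Rstar_largest lt unfolding G_def by force+
  have Glt: "G (Rinit / real M) < G Rstar" using Gle Gne by simp
  have "harq_eta P SNR L M h Rinit = real M * G (Rinit / real M) / E Rinit" by (rule eta)
  also have "\<dots> < real M * G Rstar / E Rinit"
    using Glt Mp E1 Emono by (intro divide_strict_right_mono) auto
  also have "\<dots> \<le> real M * G Rstar / E R'"
    using Glt Gpos Mp E1 Emono by (intro divide_left_mono) auto
  also have "\<dots> = harq_eta P SNR L M h R'" using eta[of R'] Mp by (simp add: R'_def)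
  finally show False using Rinit_max[OF R'pos] by simp
qed

end
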